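(* Let $p_i(n)=y_i(n)$ and let $q_i(n)\in\mathcal F(\mathcal O)$ be the unique functions satisfying $$\sum_{\ell=0}^N b_\alpha(\ell)v^\ell=\exp\Big(\frac12\sum_{n=0}^N\sum_{i=1}^s\alpha(h_i)q_i(n)v^n\Big)\ \text{in } \mathcal F(\mathcal O)\otimes\mathbb R[v]/\langle v^{N+1}\rangle\ \text{for all }\alpha\in\Delta.$$ Then $S=\{p_i(n),q_i(n):1\le i\le s,\ 0\le n\le N\}$ is a system of independent generators of the Poisson algebra $(\mathcal F(\mathcal O),\{-,-\}_R)$, and $$\{p_i(m),p_j(n)\}_R=\{q_i(m),q_j(n)\}_R=0,\qquad \{p_i(m),q_j(n)\}_R=\delta_{ij}\delta_{m+n,N}$$ for all $1\le i,j\le s$ and $0\le m,n\le N$.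
   Context: Let $\mathfrak g$ be a finite-dimensional split simple real Lie algebra of rank $s$, split Cartan subalgebra $\mathfrak h$, roots $\Phi$, positive roots $\Phi_+$, base $\Delta$; $\mathfrak g\subseteq\mathfrak{gl}(M)$ via a faithful representation of minimal dimension, trace $\mathrm{tr}$. $h_1,\dots,h_s$ is a $\mathrm{tr}(xy)$-orthonormal basis of $\mathfrak h$; $e_\alpha\in\mathfrak g_\alpha,f_\alpha\in\mathfrak g_{-\alpha}$ with $\mathrm{tr}(e_\alpha f_\alpha)=1$. $\mathfrak g_N=\mathfrak g\otimes\mathbb R[u]/\langle u^{N+1}\rangle$, $x(i)$ = image of $x\otimes u^i$, $[x(i),y(j)]=[x,y](i+j)$. $R$ is linear with $R(h_i(j))=0$, $R(e_\alpha(j))=\frac12e_\alpha(j)$, $R(f_\alpha(j))=-\frac12f_\alpha(j)$; $\mathfrak g_N^R=(\mathfrak g_N,[X,Y]_R=[RX,Y]+[X,RY])$; $G_N^R$ a connected Lie group with Lie algebra $\mathfrak g_N^R$ acting on $\mathfrak g_N$ by the coadjoint action transported through $\nu(x)=(x|-)_N$, $(x(i)|y(j))_N=\delta_{i+j,N}\mathrm{tr}(xy)$. $\mathcal O=\mathrm{Ad}^*_R(G_N^R)x'$, $x'=\sum_{\alpha\in\Delta}(e_\alpha(0)+f_\alpha(0))$, an open subset of the $2s(N+1)$-dimensional space $\mathrm{Span}\{h_i(k),e_\alpha(k)+f_\alpha(k):\alpha\in\Delta,0\le k\le N\}$; each $L\in\mathcal O$ is $L=\sum_k\big(\sum_i y_i(k)h_i(k)+\sum_{\alpha\in\Delta}b_\alpha(k)(e_\alpha(k)+f_\alpha(k))\big)$,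 defining coordinates $y_i(k),b_\alpha(k)$. $\mathcal F(\mathcal O)$ is the algebra of smooth real functions on $\mathcal O$, with Poisson bracket $\{-,-\}_R$ induced by the Lie–Poisson structure of $\mathfrak g_N^R$: $\{y_i(k),y_j(\ell)\}_R=\{b_\alpha(k),b_\beta(\ell)\}_R=0$, $\{y_i(k),b_\alpha(\ell)\}_R=\frac12\alpha(h_i)b_\alpha(k+\ell-N)$ ($b_\alpha(m)=0$ for $m<0$), extended by the Leibniz rule. "Independent" means the differentials are linearly independent; "generators" means the coordinate functions $y_i(k),b_\alpha(k)$ are functions of elements of $S$. *)

theory Defs
  imports "HOL-Analysis.Analysis" "HOL-Computational_Algebra.Formal_Power_Series"
begin

text \<open>Points of the ambient space Span{h_i(k), e_alpha(k)+f_alpha(k)}: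
  a pair (Y, B) with y_i(k) = Y $ ix k $ i and b_alpha(k) = B $ ix k $ alpha,
  where ix : {0..N} -> 'k is a fixed bijection and both the Cartan index i
  and the simple roots alpha in Delta are indexed by the finite type 'r (s = CARD('r)).\<close>

type_synonym ('r, 'k) pt = "(real^'r^'k) \<times> (real^'r^'k)"

text \<open>Smooth (C-infinity) real functions on a set: differentiable, and all partial
  derivatives are again smooth (coinductively, i.e. derivatives of all orders exist).\<close>
coinductive smooth_on :: "'a::euclidean_space set \<Rightarrow> ('a \<Rightarrow> real) \<Rightarrow> bool" for S where
  "f differentiable_on S \<Longrightarrow>
   (\<forall>e\<in>Basis. smooth_on S (\<lambda>x. frechet_derivative f (at x) e)) \<Longrightarrow> smooth_on S f"

definition dir_y :: "(nat \<Rightarrow> 'k) \<Rightarrow> 'r::finite \<Rightarrow> nat \<Rightarrow> ('r, 'k::finite) pt" where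
  "dir_y ix i k = (axis (ix k) (axis i 1), 0)"

definition dir_b :: "(nat \<Rightarrow> 'k) \<Rightarrow> 'r::finite \<Rightarrow> nat \<Rightarrow> ('r, 'k::finite) pt" where
  "dir_b ix a k = (0, axis (ix k) (axis a 1))"

definition ycoord :: "(nat \<Rightarrow> 'k) \<Rightarrow> 'r::finite \<Rightarrow> nat \<Rightarrow> ('r, 'k::finite) pt \<Rightarrow> real" where
  "ycoord ix i k x = fst x $ ix k $ i"

definition bcoord :: "(nat \<Rightarrow> 'k) \<Rightarrow> 'r::finite \<Rightarrow> nat \<Rightarrow> ('r, 'k::finite) pt \<Rightarrow> real" where
  "bcoord ix a k x = snd x $ ix k $ a"

definition pd :: "('a::euclidean_space \<Rightarrow> real) \<Rightarrow> 'a \<Rightarrow> 'a \<Rightarrow> real" where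
  "pd f d x = frechet_derivative f (at x) d"

text \<open>The Poisson bracket {-,-}_R on F(S): the Leibniz extension of
  {y_i(k), y_j(l)} = {b_a(k), b_b(l)} = 0,
  {y_i(k), b_a(l)} = 1/2 a(h_i) b_a(k+l-N)  (b_a(m) = 0 for m < 0),
  where A a i = a(h_i).\<close>
definition pbR :: "nat \<Rightarrow> (nat \<Rightarrow> 'k) \<Rightarrow> ('r \<Rightarrow> 'r \<Rightarrow> real)
    \<Rightarrow> (('r::finite, 'k::finite) pt \<Rightarrow> real) \<Rightarrow> (('r, 'k) pt \<Rightarrow> real) \<Rightarrow> ('r, 'k) pt \<Rightarrow> real" where
  "pbR N ix A f g x =
     (\<Sum>i\<in>UNIV. \<Sum>k\<le>N. \<Sum>a\<in>UNIV. \<Sum>l\<le>N.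
        (if N \<le> k + l then (1/2) * A a i * bcoord ix a (k + l - N) x else 0) *
        (pd f (dir_y ix i k) x * pd g (dir_b ix a l) x
         - pd f (dir_b ix a l) x * pd g (dir_y ix i k) x))"

definition fps_exponential :: "real fps \<Rightarrow> real fps" where
  "fps_exponential P =
     fps_const (exp (fps_nth P 0)) * fps_compose (fps_exp 1) (P - fps_const (fps_nth P 0))"

end

theory Submission imports Defs begin
notation fps_nth (infixl "$$" 75)


inductive_set alg :: "('a::euclidean_space \<Rightarrow> real) set" where
  alg_lin: "bounded_linear f \<Longrightarrow> f \<in> alg"
| alg_const: "(\<lambda>x. c) \<in> alg"
| alg_add: "f \<in> alg \<Longrightarrow> g \<in> alg \<Longrightarrow> (\<lambda>x. f x + g x) \<in> alg"
| alg_mult: "f \<in> alg \<Longrightarrow> g \<in> alg \<Longrightarrow> (\<lambda>x. f x * g x) \<in> alg"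
| alg_exp: "f \<in> alg \<Longrightarrow> (\<lambda>x. exp (f x)) \<in> alg"

lemma alg_deriv:
  assumes "f \<in> alg"
  shows "\<exists>D. (\<forall>x. (f has_derivative D x) (at x)) \<and> (\<forall>e. (\<lambda>x. D x e) \<in> alg)"
  using assms
proof induction
  case (alg_lin f)
  then show ?case
    by (intro exI[of _ "\<lambda>x. f"]) (auto intro: bounded_linear_imp_has_derivative alg.alg_const)
next
  case (alg_const c)
  then show ?case by (intro exI[of _ "\<lambda>x v. 0"]) (auto intro: alg.alg_const)
next
  case (alg_add f g)
  then obtain Df Dg where f: "\<forall>x. (f has_derivative Df x) (at x)" "\<forall>e. (\<lambda>x. Df x e) \<in> alg"
    and g: "\<forall>x. (g has_derivative Dg x) (at x)" "\<forall>e. (\<lambda>x. Dg x e) \<in> alg" by blast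
  show ?case
    by (intro exI[of _ "\<lambda>x v. Df x v + Dg x v"]) (use f g in \<open>auto intro!: alg.alg_add has_derivative_add\<close>)
next
  case (alg_mult f g)
  then obtain Df Dg where f: "\<forall>x. (f has_derivative Df x) (at x)" "\<forall>e. (\<lambda>x. Df x e) \<in> alg"
    and g: "\<forall>x. (g has_derivative Dg x) (at x)" "\<forall>e. (\<lambda>x. Dg x e) \<in> alg" by blast
  show ?case
    by (intro exI[of _ "\<lambda>x v. f x * Dg x v + Df x v * g x"])
      (use f g alg_mult.hyps in \<open>auto intro!: alg.alg_add alg.alg_mult has_derivative_mult\<close>)
next
  case (alg_exp f)
  then obtain Df where f: "\<forall>x. (f has_derivative Df x) (at x)" "\<forall>e. (\<lambda>x. Df x e) \<in> alg" by blast
  show ?case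
    by (intro exI[of _ "\<lambda>x v. Df x v * exp (f x)"])
      (use f alg_exp.hyps in \<open>auto intro!: alg.alg_exp alg.alg_mult has_derivative_exp\<close>)
qed

lemma alg_smooth: "f \<in> alg \<Longrightarrow> smooth_on UNIV f"
proof (coinduction arbitrary: f rule: smooth_on.coinduct)
  case (smooth_on f)
  then obtain D where D: "\<forall>x. (f has_derivative D x) (at x)" "\<forall>e. (\<lambda>x. D x e) \<in> alg"
    using alg_deriv by blast
  have fd: "frechet_derivative f (at x) = D x" for x using D(1) frechet_derivative_at by metis
  have "f differentiable_on UNIV" using D(1) unfolding differentiable_on_def differentiable_def by blast
  then show ?case using D(2) by (auto simp: fd)
qed

lemma alg_sum: "finite S \<Longrightarrow> (\<And>i. i \<in> S \<Longrightarrow> f i \<in> alg) \<Longrightarrow> (\<lambda>x. \<Sum>i\<in>S. f i x) \<in> alg"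
  by (induction S rule: finite_induct) (auto intro: alg.intros)

lemma alg_cmult: "f \<in> alg \<Longrightarrow> (\<lambda>x. c * f x) \<in> alg"
  using alg_mult[OF alg_const] by blast

lemma alg_minus: "f \<in> alg \<Longrightarrow> g \<in> alg \<Longrightarrow> (\<lambda>x. f x - g x) \<in> alg"
  using alg_add[OF _ alg_cmult[of g "-1"], of f] by simp

definition falg :: "('a::euclidean_space \<Rightarrow> real fps) \<Rightarrow> bool" where
  "falg F \<longleftrightarrow> (\<forall>n. (\<lambda>x. fps_nth (F x) n) \<in> alg)"

lemma falg_mult: "falg F \<Longrightarrow> falg G \<Longrightarrow> falg (\<lambda>x. F x * G x)"
  unfolding falg_def fps_mult_nth by (auto intro!: alg_sum alg_mult)

lemma falg_const: "falg (\<lambda>x. K)"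
  unfolding falg_def by (auto intro: alg_const)

lemma falg_power: "falg F \<Longrightarrow> falg (\<lambda>x. F x ^ j)"
  by (induction j) (auto intro: falg_mult falg_const)

lemma falg_compose: "falg F \<Longrightarrow> falg (\<lambda>x. K oo F x)"
  unfolding fps_compose_nth falg_def
  by (intro allI alg_sum) (auto intro!: alg_cmult falg_power[unfolded falg_def, rule_format])

lemma falg_minus: "falg F \<Longrightarrow> falg G \<Longrightarrow> falg (\<lambda>x. F x - G x)"
  unfolding falg_def by (auto intro: alg_minus)

lemma falg_fps_const: "f \<in> alg \<Longrightarrow> falg (\<lambda>x. fps_const (f x))"
  unfolding falg_def apply (intro allI) subgoal for n by (cases "n = 0") (auto intro: alg_const) done

lemma falg_exponential: "falg F \<Longrightarrow> falg (\<lambda>x. fps_exponential (F x))"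
  unfolding fps_exponential_def
  apply (rule falg_mult)
   apply (rule falg_fps_const, rule alg_exp) apply (simp add: falg_def)
  apply (rule falg_compose, rule falg_minus, assumption)
  apply (rule falg_fps_const) apply (simp add: falg_def)
  done

lemma falg_Abs: "(\<And>n. n \<le> N \<Longrightarrow> c n \<in> alg) \<Longrightarrow> falg (\<lambda>x. Abs_fps (\<lambda>n. if n \<le> N then c n x else 0))"
  unfolding falg_def apply (intro allI) subgoal for n by (cases "n \<le> N") (auto intro: alg_const) done




lemma fpsexp0: "fps_exponential P $$ 0 = exp (P $$ 0)"
  by (simp add: fps_exponential_def)

lemma fpsexp_deriv: "fps_deriv (fps_exponential P) = fps_deriv P * fps_exponential P"
proof -
  have z: "(P - fps_const (P $$ 0)) $$ 0 = 0" by simp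
  show ?thesis
    unfolding fps_exponential_def
    by (simp add: fps_compose_deriv[OF z] mult_ac)
qed

lemma fps_mult_trunc:
  assumes "\<And>k. k \<le> n \<Longrightarrow> f $$ k = g $$ k"
  shows "(h * f) $$ n = (h * g) $$ n"
  unfolding fps_mult_nth using assms by (intro sum.cong) auto

lemma deriv_prop:
  fixes b c db dc :: "nat \<Rightarrow> real"
  assumes a1: "db 0 = dc 0 * b 0"
    and a2: "\<And>l. l < N \<Longrightarrow> of_nat (l+1) * b (l+1) = (\<Sum>k=0..l. (of_nat (k+1) * c (k+1)) * b (l-k))"
    and a3: "\<And>l. l < N \<Longrightarrow> of_nat (l+1) * db (l+1) =
        (\<Sum>k=0..l. (of_nat (k+1) * dc (k+1)) * b (l-k)) + (\<Sum>k=0..l. (of_nat (k+1) * c (k+1)) * db (l-k))"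
    and l: "l \<le> N"
  shows "db l = (\<Sum>m=0..l. dc m * b (l-m))"
proof -
  define B where "B = Abs_fps b"
  define C where "C = Abs_fps c"
  define DB where "DB = Abs_fps db"
  define DC where "DC = Abs_fps dc"
  define F where "F = DB - DC * B"
  have h2: "fps_deriv B $$ l = (fps_deriv C * B) $$ l" if "l < N" for l
    using a2[OF that] by (simp add: B_def C_def fps_mult_nth)
  have h3: "fps_deriv DB $$ l = (fps_deriv DC * B + fps_deriv C * DB) $$ l" if "l < N" for l
    using a3[OF that] by (simp add: B_def C_def DB_def DC_def fps_mult_nth)
  have F0: "F $$ 0 = 0" using a1 by (simp add: F_def B_def DB_def DC_def)
  have "F $$ l = 0" if "l \<le> N" for l
    using that
  proof (induction l rule: less_induct)
    case (less l)
    show ?case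
    proof (cases l)
      case 0
      then show ?thesis using F0 by simp
    next
      case (Suc l')
      have lN: "l' < N" using less.prems Suc by simp
      have t: "(DC * fps_deriv B) $$ l' = (DC * (fps_deriv C * B)) $$ l'"
        by (rule fps_mult_trunc) (use h2 lN in auto)
      have "fps_deriv F = fps_deriv DB - (fps_deriv DC * B + DC * fps_deriv B)"
        by (simp add: F_def fps_deriv_mult)
      then have "fps_deriv F $$ l' = (fps_deriv DC * B + fps_deriv C * DB) $$ l' - (fps_deriv DC * B) $$ l'
           - (DC * (fps_deriv C * B)) $$ l'"
        using h3[OF lN] t by simp
      also have "\<dots> = (fps_deriv C * F) $$ l'"
        by (simp add: F_def algebra_simps)
      also have "\<dots> = 0"
        unfolding fps_mult_nth
        by (rule sum.neutral) (use less.IH Suc less.prems in auto)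
      finally have "of_nat (l'+1) * F $$ (l'+1) = 0" by simp
      then show ?thesis using Suc by simp
    qed
  qed
  from this[OF l] show ?thesis
    by (simp add: F_def B_def DB_def DC_def fps_mult_nth)
qed

lemma tri_solve:
  fixes b G H :: "nat \<Rightarrow> real"
  assumes b0: "b 0 \<noteq> 0"
    and eq: "\<And>l. l \<le> N \<Longrightarrow> (\<Sum>m=0..l. G m * b (l-m)) = (\<Sum>m=0..l. H m * b (l-m))"
    and n: "n \<le> N"
  shows "G n = H n"
  using n
proof (induction n rule: less_induct)
  case (less n)
  show ?case
  proof (cases n)
    case 0
    then show ?thesis using eq[of 0] b0 by simp
  next
    case (Suc n')
    have s: "(\<Sum>m=0..n'. G m * b (n-m)) = (\<Sum>m=0..n'. H m * b (n-m))"
      by (rule sum.cong) (use less Suc in auto)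
    have "(\<Sum>m=0..n. G m * b (n-m)) = (\<Sum>m=0..n. H m * b (n-m))" using eq less.prems by blast
    then have "G n * b 0 = H n * b 0" using s Suc by (simp add: sum.atLeast0_atMost_Suc)
    then show ?thesis using b0 by simp
  qed
qed




lemma ycoord_lin: "bounded_linear (ycoord ix i k)"
  unfolding ycoord_def
  by (intro bounded_linear_compose[OF bounded_linear_vec_nth] bounded_linear_compose[OF bounded_linear_vec_nth] bounded_linear_fst)

lemma bcoord_lin: "bounded_linear (bcoord ix i k)"
  unfolding bcoord_def
  by (intro bounded_linear_compose[OF bounded_linear_vec_nth] bounded_linear_compose[OF bounded_linear_vec_nth] bounded_linear_snd)

lemma ycoord_hd: "(ycoord ix i k has_derivative ycoord ix i k) F"
  by (rule bounded_linear_imp_has_derivative[OF ycoord_lin])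

lemma bcoord_hd: "(bcoord ix i k has_derivative bcoord ix i k) F"
  by (rule bounded_linear_imp_has_derivative[OF bcoord_lin])

lemma ycoord_fd: "frechet_derivative (ycoord ix i k) (at x) = ycoord ix i k"
  by (rule sym, rule frechet_derivative_at, rule ycoord_hd)

lemma ycoord_dir_y: "ycoord ix i k (dir_y ix j m) = (if ix k = ix m \<and> i = j then 1 else 0)"
  by (simp add: ycoord_def dir_y_def axis_def)
lemma ycoord_dir_b: "ycoord ix i k (dir_b ix j m) = 0"
  by (simp add: ycoord_def dir_b_def)
lemma bcoord_dir_y: "bcoord ix i k (dir_y ix j m) = 0"
  by (simp add: bcoord_def dir_y_def)
lemma bcoord_dir_b: "bcoord ix i k (dir_b ix j m) = (if ix k = ix m \<and> i = j then 1 else 0)"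
  by (simp add: bcoord_def dir_b_def axis_def)

lemma eq_deriv:
  assumes "open S" "x \<in> S" "\<And>y. y \<in> S \<Longrightarrow> f y = g y"
    "(f has_derivative f') (at x)" "(g has_derivative g') (at x)"
  shows "f' = g'"
  by (metis assms has_derivative_transform_within_open has_derivative_unique)

lemma inv_inj:
  fixes A :: "'r::finite \<Rightarrow> 'r \<Rightarrow> real"
  assumes inv: "invertible (\<chi> a i. A a i :: real^'r^'r)"
    and eq: "\<And>a. (\<Sum>i\<in>UNIV. A a i * u i) = (\<Sum>i\<in>UNIV. A a i * v i)"
  shows "u = v"
proof -
  define M where "M = (\<chi> a i. A a i :: real^'r^'r)"
  have "M *v (\<chi> i. u i) = M *v (\<chi> i. v i)"
    using eq by (simp add: vec_eq_iff matrix_vector_mult_def M_def)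
  moreover obtain M' where "M' ** M = mat 1" using inv unfolding invertible_def M_def by blast
  ultimately have "(\<chi> i. u i) = (\<chi> i. v i :: real^'r)"
    by (metis matrix_vector_mul_assoc matrix_vector_mul_lid)
  then show ?thesis by (simp add: vec_eq_iff fun_eq_iff)
qed

lemma sum2_delta:
  fixes T :: "'r::finite \<Rightarrow> nat \<Rightarrow> real"
  assumes "m0 \<le> N"
  shows "(\<Sum>i\<in>UNIV. \<Sum>k\<le>N. if i = i0 \<and> k = m0 then T i k else 0) = T i0 m0"
proof -
  have "(\<Sum>k\<le>N. if i = i0 \<and> k = m0 then T i k else 0) = (if i = i0 then T i m0 else 0)" for i
    using assms by (cases "i = i0") auto
  then show ?thesis by simp
qed

lemma pbR_antisym: "pbR N ix A f g x = - pbR N ix A g f x"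
  unfolding pbR_def by (simp add: sum_negf[symmetric] algebra_simps)

definition Vf :: "nat \<Rightarrow> (nat \<Rightarrow> 'k) \<Rightarrow> ('r \<Rightarrow> 'r \<Rightarrow> real) \<Rightarrow> ('r::finite, 'k::finite) pt
   \<Rightarrow> (('r, 'k) pt \<Rightarrow> real) \<Rightarrow> ('r, 'k) pt" where
  "Vf N ix A x g = (\<Sum>i\<in>UNIV. \<Sum>k\<le>N. \<Sum>a\<in>UNIV. \<Sum>l\<le>N.
      (if N \<le> k + l then (1/2) * A a i * bcoord ix a (k + l - N) x else 0) *\<^sub>R
      (g (dir_b ix a l) *\<^sub>R dir_y ix i k - g (dir_y ix i k) *\<^sub>R dir_b ix a l))"

lemma pbR_Vf:
  assumes "linear (frechet_derivative f (at x))"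
  shows "pbR N ix A f g x = frechet_derivative f (at x) (Vf N ix A x (frechet_derivative g (at x)))"
  unfolding pbR_def Vf_def pd_def
  by (simp add: linear_sum[OF assms] linear_scale[OF assms] linear_diff[OF assms] algebra_simps)

lemma pbR_y:
  assumes m0: "m0 \<le> N" and inj: "inj_on ix {..N}" and lin: "linear (frechet_derivative g (at x))"
    and gy: "\<And>i k. frechet_derivative g (at x) (dir_y ix i k) = 0"
  shows "pbR N ix A (ycoord ix i0 m0) g x = frechet_derivative g (at x)
     (\<Sum>a\<in>UNIV. \<Sum>l\<le>N. (if N \<le> m0 + l then (1/2) * A a i0 * bcoord ix a (m0 + l - N) x else 0) *\<^sub>R dir_b ix a l)"
proof -
  let ?D = "frechet_derivative g (at x)"
  let ?T = "\<lambda>i k. \<Sum>a\<in>UNIV. \<Sum>l\<le>N. (if N \<le> k + l then (1/2) * A a i * bcoord ix a (k + l - N) x else 0) * ?D (dir_b ix a l)"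
  have "pbR N ix A (ycoord ix i0 m0) g x = (\<Sum>i\<in>UNIV. \<Sum>k\<le>N. if i = i0 \<and> k = m0 then ?T i k else 0)"
    unfolding pbR_def pd_def ycoord_fd
  proof (intro sum.cong refl)
    fix i k assume k: "k \<in> {..N}"
    have e: "(ix m0 = ix k) = (m0 = k)" using inj m0 k by (auto simp: inj_on_eq_iff)
    show "(\<Sum>a\<in>UNIV. \<Sum>l\<le>N. (if N \<le> k + l then 1 / 2 * A a i * bcoord ix a (k + l - N) x else 0) *
             (ycoord ix i0 m0 (dir_y ix i k) * ?D (dir_b ix a l) - ycoord ix i0 m0 (dir_b ix a l) * ?D (dir_y ix i k)))
         = (if i = i0 \<and> k = m0 then ?T i k else 0)"
      by (cases "i = i0 \<and> k = m0") (auto simp: ycoord_dir_y ycoord_dir_b gy e)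
  qed
  also have "\<dots> = ?T i0 m0" by (rule sum2_delta[OF m0])
  also have "\<dots> = ?D (\<Sum>a\<in>UNIV. \<Sum>l\<le>N. (if N \<le> m0 + l then (1/2) * A a i0 * bcoord ix a (m0 + l - N) x else 0) *\<^sub>R dir_b ix a l)"
    by (simp add: linear_sum[OF lin] linear_scale[OF lin])
  finally show ?thesis .
qed

lemma bcoord_W:
  assumes l0: "l0 \<le> N" and inj: "inj_on ix {..N}"
  shows "bcoord ix a0 l0 (\<Sum>a\<in>UNIV. \<Sum>l\<le>N. T a l *\<^sub>R dir_b ix a l) = T a0 l0"
proof -
  have lin: "linear (bcoord ix a0 l0)" by (rule bounded_linear.linear[OF bcoord_lin])
  have "bcoord ix a0 l0 (\<Sum>a\<in>UNIV. \<Sum>l\<le>N. T a l *\<^sub>R dir_b ix a l)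
     = (\<Sum>a\<in>UNIV. \<Sum>l\<le>N. if a = a0 \<and> l = l0 then T a l else 0)"
    unfolding linear_sum[OF lin] linear_scale[OF lin]
  proof (intro sum.cong refl)
    fix a l assume l: "l \<in> {..N}"
    have e: "(ix l0 = ix l) = (l0 = l)" using inj l0 l by (auto simp: inj_on_eq_iff)
    show "T a l *\<^sub>R bcoord ix a0 l0 (dir_b ix a l) = (if a = a0 \<and> l = l0 then T a l else 0)"
      by (auto simp: bcoord_dir_b e)
  qed
  also have "\<dots> = T a0 l0" by (rule sum2_delta[OF l0])
  finally show ?thesis .
qed

theorem proposition4p2:
  fixes N :: nat
    and ix :: "nat \<Rightarrow> 'k::finite"
    and A :: "'r::finite \<Rightarrow> 'r \<Rightarrow> real"
    and Orb :: "('r, 'k) pt set"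
    and q :: "'r \<Rightarrow> nat \<Rightarrow> ('r, 'k) pt \<Rightarrow> real"
  assumes ix: "bij_betw ix {..N} UNIV"
    and A_inv: "invertible (\<chi> a i. A a i :: real^'r^'r)"
    and O_open: "open Orb"
    and O_conn: "connected Orb"
    and x'_in: "(0, \<chi> k a. if k = ix 0 then 1 else 0) \<in> Orb"
    and q_smooth: "\<And>i n. n \<le> N \<Longrightarrow> smooth_on Orb (q i n)"
    and q_def: "\<And>a x l. x \<in> Orb \<Longrightarrow> l \<le> N \<Longrightarrow>
        bcoord ix a l x =
        fps_nth (fps_exponential (Abs_fps (\<lambda>n. if n \<le> N then
                   (1/2) * (\<Sum>i\<in>UNIV. A a i * q i n x) else 0))) l"
  shows
    "(\<forall>x\<in>Orb. \<forall>c d :: 'r \<Rightarrow> nat \<Rightarrow> real.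
        (\<forall>v. (\<Sum>i\<in>UNIV. \<Sum>n\<le>N. c i n * frechet_derivative (ycoord ix i n) (at x) v
                                + d i n * frechet_derivative (q i n) (at x) v) = 0)
        \<longrightarrow> (\<forall>i. \<forall>n\<le>N. c i n = 0 \<and> d i n = 0))
     \<and> (\<exists>\<Phi> :: ('r, 'k) pt \<Rightarrow> ('r, 'k) pt.
          (\<forall>i. \<forall>k\<le>N. smooth_on UNIV (ycoord ix i k \<circ> \<Phi>) \<and> smooth_on UNIV (bcoord ix i k \<circ> \<Phi>))
          \<and> (\<forall>x\<in>Orb. \<Phi> (\<chi> k i. ycoord ix i (inv_into {..N} ix k) x,
                        \<chi> k i. q i (inv_into {..N} ix k) x) = x))
     \<and> (\<forall>i j. \<forall>m\<le>N. \<forall>n\<le>N. \<forall>x\<in>Orb.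
          pbR N ix A (ycoord ix i m) (ycoord ix j n) x = 0
          \<and> pbR N ix A (q i m) (q j n) x = 0
          \<and> pbR N ix A (ycoord ix i m) (q j n) x
              = (if i = j \<and> m + n = N then 1 else 0))"
proof -
  have inj: "inj_on ix {..N}" using ix by (simp add: bij_betw_def)
  have surj: "\<And>k. ix (inv_into {..N} ix k) = k" using ix by (metis bij_betw_def f_inv_into_f UNIV_I)
  have invle: "\<And>k. inv_into {..N} ix k \<le> N" using ix by (metis bij_betw_def inv_into_into UNIV_I atMost_iff)
  have invix: "\<And>n. n \<le> N \<Longrightarrow> inv_into {..N} ix (ix n) = n" using inj by (simp add: inv_into_f_f)
  have qhd: "(q i n has_derivative frechet_derivative (q i n) (at x)) (at x)"
    if x: "x \<in> Orb" and n: "n \<le> N" for x i n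
  proof -
    from q_smooth[OF n, of i] have "q i n differentiable_on Orb" by (cases rule: smooth_on.cases) auto
    hence "q i n differentiable at x" using O_open x differentiable_on_eq_differentiable_at by blast
    thus ?thesis using frechet_derivative_works by blast
  qed
  have qlin: "linear (frechet_derivative (q i n) (at x))" if "x \<in> Orb" "n \<le> N" for x i n
    using has_derivative_linear[OF qhd[OF that]] .
  have b0: "bcoord ix a 0 x \<noteq> 0" if x: "x \<in> Orb" for x a
    using q_def[OF x, of 0 a] by (simp add: fpsexp0)

  have K: "bcoord ix a l w = (\<Sum>m=0..l. ((1/2) * (\<Sum>i\<in>UNIV. A a i * frechet_derivative (q i m) (at x) w))
              * bcoord ix a (l-m) x)"
    if x: "x \<in> Orb" and l: "l \<le> N" for x a w l
  proof -
    define cc where "cc n x' = (if n \<le> N then (1/2) * (\<Sum>i\<in>UNIV. A a i * q i n x') else 0)" for n x'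
    define dcc where "dcc n v = (1/2) * (\<Sum>i\<in>UNIV. A a i * frechet_derivative (q i n) (at x) v)" for n v
    define dc where "dc n = (if n \<le> N then dcc n w else 0)" for n
    have E: "bcoord ix a j x' = fps_exponential (Abs_fps (\<lambda>n. cc n x')) $$ j" if "x' \<in> Orb" "j \<le> N" for x' j
      unfolding cc_def by (rule q_def[OF that])
    have R0: "bcoord ix a 0 x' = exp (cc 0 x')" if "x' \<in> Orb" for x'
      using E[OF that, of 0] by (simp add: fpsexp0)
    have Rl: "of_nat (l'+1) * bcoord ix a (l'+1) x' = (\<Sum>k=0..l'. (of_nat (k+1) * cc (k+1) x') * bcoord ix a (l'-k) x')"
      if x': "x' \<in> Orb" and l': "l' < N" for x' l'
    proof -
      let ?E = "fps_exponential (Abs_fps (\<lambda>n. cc n x'))"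
      have "fps_deriv ?E $$ l' = (fps_deriv (Abs_fps (\<lambda>n. cc n x')) * ?E) $$ l'" by (simp only: fpsexp_deriv)
      hence "of_nat (l'+1) * ?E $$ (l'+1) = (\<Sum>k=0..l'. (of_nat (k+1) * cc (k+1) x') * ?E $$ (l'-k))"
        by (simp only: fps_deriv_nth fps_mult_nth fps_nth_Abs_fps)
      moreover have "?E $$ (l'+1) = bcoord ix a (l'+1) x'" using E[OF x', of "l'+1"] l' by simp
      moreover have "(\<Sum>k=0..l'. (of_nat (k+1) * cc (k+1) x') * ?E $$ (l'-k))
          = (\<Sum>k=0..l'. (of_nat (k+1) * cc (k+1) x') * bcoord ix a (l'-k) x')"
        by (rule sum.cong) (use E[OF x'] l' in auto)
      ultimately show ?thesis by simp
    qed
    have ccd: "((\<lambda>x'. cc n x') has_derivative dcc n) (at x)" if n: "n \<le> N" for n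
    proof -
      have "((\<lambda>x'. (1/2) * (\<Sum>i\<in>UNIV. A a i * q i n x')) has_derivative dcc n) (at x)"
        unfolding dcc_def
        by (intro has_derivative_mult_right has_derivative_sum qhd[OF x n])
      then show ?thesis using n by (simp add: cc_def)
    qed
    have a1: "bcoord ix a 0 w = dc 0 * bcoord ix a 0 x"
    proof -
      have "((\<lambda>x'. exp (cc 0 x')) has_derivative (\<lambda>v. dcc 0 v * exp (cc 0 x))) (at x)"
        by (rule has_derivative_exp[OF ccd]) simp
      from eq_deriv[OF O_open x R0 bcoord_hd this]
      have "bcoord ix a 0 = (\<lambda>v. dcc 0 v * exp (cc 0 x))" .
      then show ?thesis using R0[OF x] by (simp add: dc_def)
    qed
    have a2: "of_nat (l'+1) * bcoord ix a (l'+1) x = (\<Sum>k=0..l'. (of_nat (k+1) * cc (k+1) x) * bcoord ix a (l'-k) x)"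
      if "l' < N" for l' using Rl[OF x that] .
    have a3: "of_nat (l'+1) * bcoord ix a (l'+1) w =
        (\<Sum>k=0..l'. (of_nat (k+1) * dc (k+1)) * bcoord ix a (l'-k) x) + (\<Sum>k=0..l'. (of_nat (k+1) * cc (k+1) x) * bcoord ix a (l'-k) w)"
      if l': "l' < N" for l'
    proof -
      have d1: "((\<lambda>x'. of_nat (l'+1) * bcoord ix a (l'+1) x') has_derivative (\<lambda>v. of_nat (l'+1) * bcoord ix a (l'+1) v)) (at x)"
        by (rule has_derivative_mult_right[OF bcoord_hd])
      have d2: "((\<lambda>x'. \<Sum>k=0..l'. (of_nat (k+1) * cc (k+1) x') * bcoord ix a (l'-k) x') has_derivative
          (\<lambda>v. \<Sum>k=0..l'. (of_nat (k+1) * cc (k+1) x) * bcoord ix a (l'-k) v + (of_nat (k+1) * dcc (k+1) v) * bcoord ix a (l'-k) x)) (at x)"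
        apply (rule has_derivative_sum)
        apply (rule has_derivative_mult)
         apply (rule has_derivative_mult_right)
         apply (rule ccd) using l' apply simp
        apply (rule bcoord_hd)
        done
      have "(\<lambda>v. of_nat (l'+1) * bcoord ix a (l'+1) v) =
          (\<lambda>v. \<Sum>k=0..l'. (of_nat (k+1) * cc (k+1) x) * bcoord ix a (l'-k) v + (of_nat (k+1) * dcc (k+1) v) * bcoord ix a (l'-k) x)"
        by (rule eq_deriv[OF O_open x _ d1 d2]) (use Rl l' in blast)
      from fun_cong[OF this, of w]
      have e: "of_nat (l'+1) * bcoord ix a (l'+1) w = (\<Sum>k=0..l'. (of_nat (k+1) * cc (k+1) x) * bcoord ix a (l'-k) w)
           + (\<Sum>k=0..l'. (of_nat (k+1) * dcc (k+1) w) * bcoord ix a (l'-k) x)"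
        by (simp add: sum.distrib)
      have "(\<Sum>k=0..l'. (of_nat (k+1) * dc (k+1)) * bcoord ix a (l'-k) x) = (\<Sum>k=0..l'. (of_nat (k+1) * dcc (k+1) w) * bcoord ix a (l'-k) x)"
        by (rule sum.cong) (use l' in \<open>auto simp: dc_def\<close>)
      then show ?thesis using e by simp
    qed
    have "bcoord ix a l w = (\<Sum>m=0..l. dc m * bcoord ix a (l-m) x)"
      by (rule deriv_prop[where b = "\<lambda>j. bcoord ix a j x" and c = "\<lambda>n. cc n x" and db = "\<lambda>j. bcoord ix a j w"
            and dc = dc and N = N, OF a1 a2 a3 l])
    also have "\<dots> = (\<Sum>m=0..l. dcc m w * bcoord ix a (l-m) x)"
      by (rule sum.cong) (use l in \<open>auto simp: dc_def\<close>)
    finally show ?thesis by (simp add: dcc_def)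
  qed

  have Dq_y: "frechet_derivative (q j n) (at x) (dir_y ix i k) = 0"
    if x: "x \<in> Orb" and n: "n \<le> N" for x i k j n
  proof -
    let ?w = "dir_y ix i k"
    have "(\<Sum>i'\<in>UNIV. A a i' * frechet_derivative (q i' n) (at x) ?w) = (\<Sum>i'\<in>UNIV. A a i' * 0)" for a
    proof -
      have "(\<lambda>m. (1/2) * (\<Sum>i'\<in>UNIV. A a i' * frechet_derivative (q i' m) (at x) ?w)) n = (\<lambda>_. 0) n"
      proof (rule tri_solve[where b = "\<lambda>j. bcoord ix a j x" and N = N and n = n and
           G = "\<lambda>m. (1/2) * (\<Sum>i'\<in>UNIV. A a i' * frechet_derivative (q i' m) (at x) ?w)" and H = "\<lambda>_. 0"])
        show "bcoord ix a 0 x \<noteq> 0" by (rule b0[OF x])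
        show "n \<le> N" by (rule n)
        fix l assume l: "l \<le> N"
        show "(\<Sum>m = 0..l. (\<lambda>m. (1/2) * (\<Sum>i'\<in>UNIV. A a i' * frechet_derivative (q i' m) (at x) ?w)) m * bcoord ix a (l - m) x) =
              (\<Sum>m = 0..l. (\<lambda>_. 0) m * bcoord ix a (l - m) x)"
          using K[OF x l, of a ?w] by (simp add: bcoord_dir_y)
      qed
      then show ?thesis by simp
    qed
    from inv_inj[OF A_inv this] have "(\<lambda>i'. frechet_derivative (q i' n) (at x) ?w) = (\<lambda>_. 0)" .
    then show ?thesis by (rule fun_cong)
  qed

  define W where "W x i0 m0 = (\<Sum>a\<in>UNIV. \<Sum>l\<le>N. (if N \<le> m0 + l then (1/2) * A a i0 * bcoord ix a (m0 + l - N) x else 0) *\<^sub>R dir_b ix a l)"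
    for x :: "('r,'k) pt" and i0 m0

  have Dq_W: "frechet_derivative (q j n) (at x) (W x i0 m0) = (if j = i0 \<and> n = N - m0 then 1 else 0)"
    if x: "x \<in> Orb" and n: "n \<le> N" and m0: "m0 \<le> N" for x i0 m0 j n
  proof -
    let ?w = "W x i0 m0"
    have "(\<Sum>i'\<in>UNIV. A a i' * frechet_derivative (q i' n) (at x) ?w)
        = (\<Sum>i'\<in>UNIV. A a i' * (if i' = i0 \<and> n = N - m0 then 1 else 0))" for a
    proof -
      have "(\<lambda>m. (1/2) * (\<Sum>i'\<in>UNIV. A a i' * frechet_derivative (q i' m) (at x) ?w)) n
          = (\<lambda>m. if m = N - m0 then (1/2) * A a i0 else 0) n"
      proof (rule tri_solve[where b = "\<lambda>j. bcoord ix a j x" and N = N and n = n and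
           G = "\<lambda>m. (1/2) * (\<Sum>i'\<in>UNIV. A a i' * frechet_derivative (q i' m) (at x) ?w)" and
           H = "\<lambda>m. if m = N - m0 then (1/2) * A a i0 else 0"])
        show "bcoord ix a 0 x \<noteq> 0" by (rule b0[OF x])
        show "n \<le> N" by (rule n)
        fix l assume l: "l \<le> N"
        have bw: "bcoord ix a l ?w = (if N \<le> m0 + l then (1/2) * A a i0 * bcoord ix a (m0 + l - N) x else 0)"
          unfolding W_def by (rule bcoord_W[OF l inj])
        have "(\<Sum>m = 0..l. (if m = N - m0 then (1/2) * A a i0 else 0) * bcoord ix a (l - m) x)
            = (\<Sum>m \<in> {0..l}. if m = N - m0 then (1/2) * A a i0 * bcoord ix a (l - m) x else 0)"
          by (rule sum.cong) auto
        also have "\<dots> = (if N \<le> m0 + l then (1/2) * A a i0 * bcoord ix a (m0 + l - N) x else 0)"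
          using m0 by (auto simp: sum.delta' add.commute)
        finally show "(\<Sum>m = 0..l. (\<lambda>m. (1/2) * (\<Sum>i'\<in>UNIV. A a i' * frechet_derivative (q i' m) (at x) ?w)) m * bcoord ix a (l - m) x) =
              (\<Sum>m = 0..l. (\<lambda>m. if m = N - m0 then (1/2) * A a i0 else 0) m * bcoord ix a (l - m) x)"
          using K[OF x l, of a ?w] bw by simp
      qed
      moreover have "(\<Sum>i'\<in>UNIV. A a i' * (if i' = i0 then 1 else 0)) = A a i0"
        by (simp add: if_distrib cong: if_cong)
      ultimately show ?thesis by (cases "n = N - m0") auto
    qed
    from inv_inj[OF A_inv this] show ?thesis by (rule fun_cong)
  qed

  have brk: "pbR N ix A (ycoord ix i m) (ycoord ix j n) x = 0
          \<and> pbR N ix A (q i m) (q j n) x = 0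
          \<and> pbR N ix A (ycoord ix i m) (q j n) x = (if i = j \<and> m + n = N then 1 else 0)"
    if m: "m \<le> N" and n: "n \<le> N" and x: "x \<in> Orb" for i j m n x
  proof (intro conjI)
    show "pbR N ix A (ycoord ix i m) (ycoord ix j n) x = 0"
      by (simp add: pbR_def pd_def ycoord_fd ycoord_dir_b)
    show "pbR N ix A (q i m) (q j n) x = 0"
      by (simp add: pbR_def pd_def Dq_y[OF x m] Dq_y[OF x n])
    have "pbR N ix A (ycoord ix i m) (q j n) x = frechet_derivative (q j n) (at x) (W x i m)"
      unfolding W_def by (rule pbR_y[OF m inj qlin[OF x n] Dq_y[OF x n]])
    also have "\<dots> = (if i = j \<and> m + n = N then 1 else 0)"
      using Dq_W[OF x n m, of j] m n by auto
    finally show "pbR N ix A (ycoord ix i m) (q j n) x = (if i = j \<and> m + n = N then 1 else 0)" .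
  qed

  have indep: "\<forall>x\<in>Orb. \<forall>c d :: 'r \<Rightarrow> nat \<Rightarrow> real.
        (\<forall>v. (\<Sum>i\<in>UNIV. \<Sum>n\<le>N. c i n * frechet_derivative (ycoord ix i n) (at x) v
                                + d i n * frechet_derivative (q i n) (at x) v) = 0)
        \<longrightarrow> (\<forall>i. \<forall>n\<le>N. c i n = 0 \<and> d i n = 0)"
  proof (intro ballI allI impI conjI)
    fix x c d i n
    assume x: "x \<in> Orb"
      and H: "\<forall>v. (\<Sum>i\<in>UNIV. \<Sum>n\<le>N. c i n * frechet_derivative (ycoord ix i n) (at x) v
                                + d i n * frechet_derivative (q i n) (at x) v) = 0"
      and n: "n \<le> N"
    have Nn: "N - n \<le> N" by simp
    have ylin: "linear (frechet_derivative (ycoord ix i' n') (at x))" for i' n'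
      by (simp add: ycoord_fd bounded_linear.linear[OF ycoord_lin])
    define v1 where "v1 = Vf N ix A x (frechet_derivative (q i (N-n)) (at x))"
    have "0 = (\<Sum>i'\<in>UNIV. \<Sum>n'\<le>N. c i' n' * frechet_derivative (ycoord ix i' n') (at x) v1
                                + d i' n' * frechet_derivative (q i' n') (at x) v1)" using spec[OF H, of v1] by simp
    also have "\<dots> = (\<Sum>i'\<in>UNIV. \<Sum>n'\<le>N. if i' = i \<and> n' = n then c i' n' else 0)"
    proof (intro sum.cong refl)
      fix i' n' assume n': "n' \<in> {..N}"
      have e1: "frechet_derivative (ycoord ix i' n') (at x) v1 = (if i' = i \<and> n' = n then 1 else 0)"
        unfolding v1_def pbR_Vf[OF ylin, symmetric] using brk[OF _ Nn x, of n' i' i] n' n by auto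
      have e2: "frechet_derivative (q i' n') (at x) v1 = 0"
        using pbR_Vf[OF qlin[OF x, where i=i' and n=n'], where g = "q i (N-n)" and N=N and ix=ix and A=A] brk[OF _ Nn x, of n' i' i] n' by (auto simp: v1_def)
      show "c i' n' * frechet_derivative (ycoord ix i' n') (at x) v1 + d i' n' * frechet_derivative (q i' n') (at x) v1
          = (if i' = i \<and> n' = n then c i' n' else 0)" using e1 e2 by simp
    qed
    also have "\<dots> = c i n" by (rule sum2_delta[OF n])
    finally show "c i n = 0" by simp
    define v2 where "v2 = Vf N ix A x (frechet_derivative (ycoord ix i (N-n)) (at x))"
    have "0 = (\<Sum>i'\<in>UNIV. \<Sum>n'\<le>N. c i' n' * frechet_derivative (ycoord ix i' n') (at x) v2
                                + d i' n' * frechet_derivative (q i' n') (at x) v2)" using spec[OF H, of v2] by simp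
    also have "\<dots> = (\<Sum>i'\<in>UNIV. \<Sum>n'\<le>N. if i' = i \<and> n' = n then - d i' n' else 0)"
    proof (intro sum.cong refl)
      fix i' n' assume n': "n' \<in> {..N}"
      have e1: "frechet_derivative (ycoord ix i' n') (at x) v2 = 0"
        unfolding v2_def pbR_Vf[OF ylin, symmetric] using brk[OF _ Nn x, of n' i' i] n' by auto
      have ar: "(N + n' - n = N) = (n' = n)" using n n' by auto
      have e2: "frechet_derivative (q i' n') (at x) v2 = - (if i' = i \<and> n' = n then 1 else 0)"
        using pbR_Vf[OF qlin[OF x, where i=i' and n=n'], where g = "ycoord ix i (N-n)" and N=N and ix=ix and A=A] pbR_antisym[of N ix A "q i' n'"]
          brk[OF Nn _ x, of n' i i'] n' n by (auto simp: v2_def ar)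
      show "c i' n' * frechet_derivative (ycoord ix i' n') (at x) v2 + d i' n' * frechet_derivative (q i' n') (at x) v2
          = (if i' = i \<and> n' = n then - d i' n' else 0)" using e1 e2 by simp
    qed
    also have "\<dots> = - d i n" by (rule sum2_delta[OF n])
    finally show "d i n = 0" by simp
  qed

  define \<Phi> where "\<Phi> z = (fst z, \<chi> k a. fps_exponential (Abs_fps (\<lambda>n. if n \<le> N then
      (1/2) * (\<Sum>i\<in>UNIV. A a i * snd z $ ix n $ i) else 0)) $$ inv_into {..N} ix k)"
    for z :: "('r,'k) pt"
  have sm: "smooth_on UNIV (ycoord ix i k \<circ> \<Phi>) \<and> smooth_on UNIV (bcoord ix i k \<circ> \<Phi>)" for i k
  proof
    have "ycoord ix i k \<circ> \<Phi> = ycoord ix i k" by (simp add: fun_eq_iff \<Phi>_def ycoord_def)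
    then show "smooth_on UNIV (ycoord ix i k \<circ> \<Phi>)" using alg_smooth[OF alg_lin[OF ycoord_lin]] by simp
    have "bcoord ix i k \<circ> \<Phi> = (\<lambda>z. fps_exponential (Abs_fps (\<lambda>n. if n \<le> N then
      (1/2) * (\<Sum>i'\<in>UNIV. A i i' * snd z $ ix n $ i') else 0)) $$ inv_into {..N} ix (ix k))"
      by (simp add: fun_eq_iff \<Phi>_def bcoord_def)
    moreover have "(\<lambda>z. fps_exponential (Abs_fps (\<lambda>n. if n \<le> N then
      (1/2) * (\<Sum>i'\<in>UNIV. A i i' * snd z $ ix n $ i') else 0)) $$ inv_into {..N} ix (ix k)) \<in> alg"
    proof -
      have "falg (\<lambda>z. fps_exponential (Abs_fps (\<lambda>n. if n \<le> N then
          (\<lambda>n z. (1/2) * (\<Sum>i'\<in>UNIV. A i i' * snd z $ ix n $ i')) n z else 0)))"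
      proof (intro falg_exponential falg_Abs)
        fix n
        show "(\<lambda>z. (1/2) * (\<Sum>i'\<in>UNIV. A i i' * snd z $ ix n $ i')) \<in> alg"
          by (intro alg_cmult alg_sum alg_lin) (auto intro!: bounded_linear_compose[OF bounded_linear_vec_nth] bounded_linear_snd)
      qed
      then show ?thesis unfolding falg_def by (rule spec)
    qed
    ultimately show "smooth_on UNIV (bcoord ix i k \<circ> \<Phi>)" using alg_smooth by simp
  qed
  have inv: "\<Phi> (\<chi> k i. ycoord ix i (inv_into {..N} ix k) x, \<chi> k i. q i (inv_into {..N} ix k) x) = x"
    if x: "x \<in> Orb" for x
  proof -
    have f: "(\<chi> k i. ycoord ix i (inv_into {..N} ix k) x) = fst x"
      by (simp add: vec_eq_iff ycoord_def surj)
    have s: "(\<chi> k a. fps_exponential (Abs_fps (\<lambda>n. if n \<le> N then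
      (1/2) * (\<Sum>i\<in>UNIV. A a i * (\<chi> k i. q i (inv_into {..N} ix k) x) $ ix n $ i) else 0)) $$ inv_into {..N} ix k)
      = snd x"
    proof -
      have pt: "fps_exponential (Abs_fps (\<lambda>n. if n \<le> N then
        (1/2) * (\<Sum>i\<in>UNIV. A a i * q i (inv_into {..N} ix (ix n)) x) else 0)) $$ inv_into {..N} ix k
        = snd x $ k $ a" for k a
      proof -
        have "(\<lambda>n. if n \<le> N then (1/2) * (\<Sum>i\<in>UNIV. A a i * q i (inv_into {..N} ix (ix n)) x) else 0)
            = (\<lambda>n. if n \<le> N then (1/2) * (\<Sum>i\<in>UNIV. A a i * q i n x) else 0)"
          by (auto simp: fun_eq_iff invix)
        moreover have "bcoord ix a (inv_into {..N} ix k) x = snd x $ k $ a"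
          by (simp add: bcoord_def surj)
        ultimately show ?thesis
          using q_def[OF x invle, of a k] by (simp only:)
      qed
      show ?thesis
        by (simp only: vec_eq_iff vec_lambda_beta pt) simp
    qed
    show ?thesis by (simp only: \<Phi>_def fst_conv snd_conv f s prod.collapse)
  qed
  show ?thesis
  proof (intro conjI)
    show "\<exists>\<Phi> :: ('r, 'k) pt \<Rightarrow> ('r, 'k) pt.
          (\<forall>i. \<forall>k\<le>N. smooth_on UNIV (ycoord ix i k \<circ> \<Phi>) \<and> smooth_on UNIV (bcoord ix i k \<circ> \<Phi>))
          \<and> (\<forall>x\<in>Orb. \<Phi> (\<chi> k i. ycoord ix i (inv_into {..N} ix k) x,
                        \<chi> k i. q i (inv_into {..N} ix k) x) = x)"
      by (rule exI[of _ \<Phi>]) (use sm inv in blast)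
  qed (use indep brk in blast)+
qed

end
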